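(* Let $\ell(\boldsymbol{\theta},z)$ be a loss which is $L$-Lipschitz in $\boldsymbol{\theta}\in\mathbb{R}^m$ (Euclidean norm) for every example $z$, and let $\mathbf{g}(\boldsymbol{\theta},z)\in\mathbb{R}^m$ be smooth with $\|\mathbf{g}(\boldsymbol{\theta},z)\|\le\xi$ for all $\boldsymbol{\theta},z$. For a training set $S=(z_1,\dots,z_n)$ and mini-batch size $1\le b\le n$, consider the stochastic discrete-time optimizer $$\boldsymbol{\theta}^S_{t+1}=\frac1b\sum_{i=1}^b\mathbf{g}(\boldsymbol{\theta}^S_t,z_{i}),$$ where at each step $b$ indices are sampled at random from $\{1,\dots,n\}$ and the corresponding examples of $S$ form the mini-batch, the initial condition being chosen (possibly randomly) within a Euclidean ball of radius $C/2$ around a fixed reference point. Let $\mathcal{A}(S)=\boldsymbol{\theta}^S_t$. Suppose this optimizer is contracting in expectation: there are $0<\mu<1$ and metrics $\mathbf{M}_0,\dots,\mathbf{M}_t$ with $M_{min}\mathbf{I}\preceq\mathbf{M}_k\preceq M_{max}\mathbf{I}$ such that, for any two trajectories $\mathbf{x}_k,\mathbf{y}_k$ driven by the same realization $\Gamma$ of the mini-batch sampling, $\mathbb{E}_{\mathcal{A}}[d_{\mathcal{M}_{k+1}}(\mathbf{x}_{k+1},\mathbf{y}_{k+1})]\le\mu\,\mathbb{E}_{\mathcal{A}}[d_{\mathcal{M}_k}(\mathbf{x}_k,\mathbf{y}_k)]$. Let $\chi=\sqrt{M_{max}/M_{min}}$. Then $\mathcal{A}$ is uniformly $\epsilon$-stable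 with $$\epsilon\le L\chi C\mu^t+\frac{2\chi L\xi}{(1-\mu)n}.$$
   Context: Training set $S=(z_1,\dots,z_n)$ of i.i.d. examples. $d_{\mathcal{M}_k}$ denotes the geodesic distance on $\mathbb{R}^m$ with respect to the Riemannian metric $\mathbf{M}_k$. An algorithm $\mathcal{A}$ is $\epsilon$-uniformly stable if for all training sets $S,S'$ differing in at most one example, $\sup_z\mathbb{E}_{\mathcal{A}}[\ell(\mathcal{A}(S);z)-\ell(\mathcal{A}(S');z)]\le\epsilon$, the expectation being over the randomness of $\mathcal{A}$ (initialization and mini-batch sampling); when comparing $S$ and $S'$, the same sampled indices are used at each step to draw mini-batches from $S$ and from $S'$. *)

theory Defs
  imports "HOL-Analysis.Analysis" "HOL-Probability.Probability"
begin

text \<open>Smooth (C-infinity) maps on R^m: all iterated Frechet derivatives exist everywhere.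
  F is a family of maps closed under taking directional derivatives of the Frechet derivative.\<close>
definition smooth_map :: "(real^'m \<Rightarrow> 'b::real_normed_vector) \<Rightarrow> bool" where
  "smooth_map f \<longleftrightarrow> (\<exists>F. f \<in> F \<and>
     (\<forall>h\<in>F. \<exists>Dh. (\<forall>x. (h has_derivative Dh x) (at x)) \<and> (\<forall>v. (\<lambda>x. Dh x v) \<in> F)))"

definition metric_field :: "(real^'m \<Rightarrow> real^'m^'m) \<Rightarrow> real \<Rightarrow> real \<Rightarrow> bool" where
  "metric_field M Mmin Mmax \<longleftrightarrow> continuous_on UNIV M \<and>
     (\<forall>x. transpose (M x) = M x) \<and>
     (\<forall>x v. Mmin * (v \<bullet> v) \<le> v \<bullet> (M x *v v) \<and> v \<bullet> (M x *v v) \<le> Mmax * (v \<bullet> v))"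

definition geodist :: "(real^'m \<Rightarrow> real^'m^'m) \<Rightarrow> real^'m \<Rightarrow> real^'m \<Rightarrow> real" where
  "geodist M x y = Inf {l. \<exists>\<gamma>. \<gamma> piecewise_C1_differentiable_on {0..1} \<and> \<gamma> 0 = x \<and> \<gamma> 1 = y \<and>
      ((\<lambda>s. sqrt (vector_derivative \<gamma> (at s) \<bullet> (M (\<gamma> s) *v vector_derivative \<gamma> (at s))))
         has_integral l) {0..1}}"

definition opt_step :: "(real^'m \<Rightarrow> 'z \<Rightarrow> real^'m) \<Rightarrow> nat \<Rightarrow> 'z list \<Rightarrow> (nat \<Rightarrow> nat) \<Rightarrow> real^'m \<Rightarrow> real^'m" where
  "opt_step g b S \<gamma> \<theta> = (1 / real b) *\<^sub>R (\<Sum>i<b. g \<theta> (S ! \<gamma> i))"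

primrec traj :: "(real^'m \<Rightarrow> 'z \<Rightarrow> real^'m) \<Rightarrow> nat \<Rightarrow> 'z list \<Rightarrow> real^'m \<Rightarrow> (nat \<Rightarrow> nat \<Rightarrow> nat) \<Rightarrow> nat \<Rightarrow> real^'m" where
  "traj g b S \<theta>0 \<Gamma> 0 = \<theta>0"
| "traj g b S \<theta>0 \<Gamma> (Suc k) = opt_step g b S (\<Gamma> k) (traj g b S \<theta>0 \<Gamma> k)"

definition batch_seqs :: "nat \<Rightarrow> nat \<Rightarrow> nat \<Rightarrow> (nat \<Rightarrow> nat \<Rightarrow> nat) set" where
  "batch_seqs t b n = (\<Pi>\<^sub>E k\<in>{..<t}. \<Pi>\<^sub>E i\<in>{..<b}. {..<n})"

text \<open>Randomness of the algorithm: initialization seed w ~ W, and mini-batch indices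
  drawn i.i.d. uniformly from {0..<n} (uniform distribution on batch_seqs).\<close>
definition alg_space :: "'w measure \<Rightarrow> nat \<Rightarrow> nat \<Rightarrow> nat \<Rightarrow> ('w \<times> (nat \<Rightarrow> nat \<Rightarrow> nat)) measure" where
  "alg_space W t b n = W \<Otimes>\<^sub>M measure_pmf (pmf_of_set (batch_seqs t b n))"

definition alg :: "(real^'m \<Rightarrow> 'z \<Rightarrow> real^'m) \<Rightarrow> nat \<Rightarrow> nat \<Rightarrow> ('z list \<Rightarrow> 'w \<Rightarrow> real^'m)
                   \<Rightarrow> 'z list \<Rightarrow> 'w \<times> (nat \<Rightarrow> nat \<Rightarrow> nat) \<Rightarrow> real^'m" where
  "alg g b t init S \<omega> = traj g b S (init S (fst \<omega>)) (snd \<omega>) t"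

definition neighbours :: "nat \<Rightarrow> 'z list \<Rightarrow> 'z list \<Rightarrow> bool" where
  "neighbours n S S' \<longleftrightarrow> length S = n \<and> length S' = n \<and> card {i. i < n \<and> S ! i \<noteq> S' ! i} \<le> 1"

definition uniformly_stable ::
  "('o measure) \<Rightarrow> nat \<Rightarrow> ('z list \<Rightarrow> 'o \<Rightarrow> 'p) \<Rightarrow> ('p \<Rightarrow> 'z \<Rightarrow> real) \<Rightarrow> real \<Rightarrow> bool" where
  "uniformly_stable P n A loss eps \<longleftrightarrow>
     (\<forall>S S'. neighbours n S S' \<longrightarrow>
        (\<forall>z. (\<integral>\<omega>. loss (A S \<omega>) z - loss (A S' \<omega>) z \<partial>P) \<le> eps))"

definition adapted_before :: "nat \<Rightarrow> ('w \<times> (nat \<Rightarrow> nat \<Rightarrow> nat) \<Rightarrow> 'a) \<Rightarrow> bool" where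
  "adapted_before k X \<longleftrightarrow> (\<forall>w \<Gamma> \<Gamma>'. (\<forall>j<k. \<Gamma> j = \<Gamma>' j) \<longrightarrow> X (w, \<Gamma>) = X (w, \<Gamma>'))"

definition contracting_in_expectation ::
  "('w \<times> (nat \<Rightarrow> nat \<Rightarrow> nat)) measure \<Rightarrow> (real^'m \<Rightarrow> 'z \<Rightarrow> real^'m) \<Rightarrow> nat \<Rightarrow> nat \<Rightarrow> 'z list
     \<Rightarrow> (nat \<Rightarrow> real^'m \<Rightarrow> real^'m^'m) \<Rightarrow> real \<Rightarrow> bool" where
  "contracting_in_expectation P g b t S M \<mu> \<longleftrightarrow>
     (\<forall>k<t. \<forall>X Y. X \<in> borel_measurable P \<and> Y \<in> borel_measurable P \<and>
        adapted_before k X \<and> adapted_before k Y \<longrightarrow>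
        (\<integral>\<^sup>+\<omega>. ennreal (geodist (M (Suc k)) (opt_step g b S (snd \<omega> k) (X \<omega>))
                                              (opt_step g b S (snd \<omega> k) (Y \<omega>))) \<partial>P)
        \<le> ennreal \<mu> * (\<integral>\<^sup>+\<omega>. ennreal (geodist (M k) (X \<omega>) (Y \<omega>)) \<partial>P))"

end

theory Submission
  imports Defs
begin

lemma path_lower:
  assumes mf: "metric_field M Mmin Mmax" and Mmin: "0 < Mmin"
    and pc: "\<gamma> piecewise_C1_differentiable_on {0..1}" and g0: "\<gamma> 0 = x" and g1: "\<gamma> 1 = y"
    and hi: "((\<lambda>s. sqrt (vector_derivative \<gamma> (at s) \<bullet> (M (\<gamma> s) *v vector_derivative \<gamma> (at s)))) has_integral l) {0..1}"
  shows "sqrt Mmin * norm (y - x) \<le> l"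
proof -
  from pc obtain K where K: "finite K" "\<gamma> C1_differentiable_on ({0..1} - K)" and cont: "continuous_on {0..1} \<gamma>"
    unfolding piecewise_C1_differentiable_on_def by blast
  from K(2) obtain D where D: "\<And>s. s \<in> {0..1} - K \<Longrightarrow> (\<gamma> has_vector_derivative D s) (at s)"
    unfolding C1_differentiable_on_def by blast
  have ftc: "((\<lambda>s. vector_derivative \<gamma> (at s)) has_integral (\<gamma> 1 - \<gamma> 0)) {0..1}"
  proof (rule fundamental_theorem_of_calculus_interior_strong[OF K(1)])
    fix s assume s: "s \<in> {0<..<1} - K"
    then have "(\<gamma> has_vector_derivative D s) (at s)" using D by auto
    then show "(\<gamma> has_vector_derivative vector_derivative \<gamma> (at s)) (at s)"
      using vector_derivative_at by metis
  qed (use cont in auto)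
  define h where "h = (\<lambda>s. sqrt (vector_derivative \<gamma> (at s) \<bullet> (M (\<gamma> s) *v vector_derivative \<gamma> (at s))))"
  have hb: "norm (vector_derivative \<gamma> (at s)) \<le> h s / sqrt Mmin" for s
  proof -
    let ?v = "vector_derivative \<gamma> (at s)"
    have "Mmin * (?v \<bullet> ?v) \<le> ?v \<bullet> (M (\<gamma> s) *v ?v)" using mf unfolding metric_field_def by blast
    then have "sqrt (Mmin * (?v \<bullet> ?v)) \<le> h s" unfolding h_def by (rule real_sqrt_le_mono)
    then have "sqrt Mmin * norm ?v \<le> h s" by (simp add: real_sqrt_mult norm_eq_sqrt_inner)
    then show ?thesis using Mmin by (simp add: field_simps mult.commute)
  qed
  have "norm (integral {0..1} (\<lambda>s. vector_derivative \<gamma> (at s))) \<le> integral {0..1} (\<lambda>s. h s / sqrt Mmin)"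
    apply (rule integral_norm_bound_integral)
    using ftc has_integral_divide[OF hi] hb unfolding h_def by auto
  also have "\<dots> = l / sqrt Mmin" using integral_unique[OF has_integral_divide[OF hi, of "sqrt Mmin"]] unfolding h_def by simp
  finally have "norm (y - x) \<le> l / sqrt Mmin" using ftc g0 g1 by (simp add: integral_unique)
  then show ?thesis using Mmin by (simp add: field_simps mult.commute)
qed

lemma cont_mv: fixes M :: "real \<Rightarrow> real^'m^'m"
  assumes "continuous_on S M" shows "continuous_on S (\<lambda>x. M x *v v)"
  unfolding matrix_vector_mult_def
  apply (rule continuous_on_vec_lambda)
  apply (intro continuous_intros)
  using assms by (auto intro: continuous_on_component)

lemma path_upper_ex:
  fixes x y :: "real^'m"
  assumes mf: "metric_field M Mmin Mmax"
  shows "\<exists>l. (\<exists>\<gamma>. \<gamma> piecewise_C1_differentiable_on {0..1} \<and> \<gamma> 0 = x \<and> \<gamma> 1 = y \<and>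
      ((\<lambda>s. sqrt (vector_derivative \<gamma> (at s) \<bullet> (M (\<gamma> s) *v vector_derivative \<gamma> (at s))))
         has_integral l) {0..1}) \<and> l \<le> sqrt Mmax * norm (y - x)"
proof -
  define \<gamma> where "\<gamma> = (\<lambda>s::real. x + s *\<^sub>R (y - x))"
  have der: "(\<gamma> has_vector_derivative (y - x)) (at s)" for s
    unfolding \<gamma>_def by (auto intro!: derivative_eq_intros)
  have vd: "vector_derivative \<gamma> (at s) = y - x" for s using der vector_derivative_at by blast
  have cg: "continuous_on A \<gamma>" for A unfolding \<gamma>_def by (intro continuous_intros)
  have pc: "\<gamma> piecewise_C1_differentiable_on {0..1}"
    unfolding piecewise_C1_differentiable_on_def C1_differentiable_on_def
    using der cg by (intro conjI exI[of _ "{}"]) (auto intro!: exI[of _ "\<lambda>_. y - x"])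
  define h where "h = (\<lambda>s. sqrt ((y - x) \<bullet> (M (\<gamma> s) *v (y - x))))"
  have Mc: "continuous_on UNIV M" using mf unfolding metric_field_def by blast
  have ch: "continuous_on {0..1} h" unfolding h_def
    apply (intro continuous_intros cont_mv)
    using continuous_on_compose2[OF Mc cg] by auto
  then have hi: "(h has_integral integral {0..1} h) {0..1}"
    using integrable_continuous_real by blast
  have hb: "h s \<le> sqrt Mmax * norm (y - x)" for s
  proof -
    have "(y - x) \<bullet> (M (\<gamma> s) *v (y - x)) \<le> Mmax * ((y - x) \<bullet> (y - x))" using mf unfolding metric_field_def by blast
    then have "h s \<le> sqrt (Mmax * ((y - x) \<bullet> (y - x)))" unfolding h_def by (rule real_sqrt_le_mono)
    then show ?thesis by (simp add: real_sqrt_mult norm_eq_sqrt_inner)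
  qed
  have "integral {0..1} h \<le> integral {0..1} (\<lambda>_::real. sqrt Mmax * norm (y - x))"
    apply (rule integral_le) using hi hb by auto
  also have "\<dots> = sqrt Mmax * norm (y - x)" by simp
  finally show ?thesis
    apply (intro exI[of _ "integral {0..1} h"] conjI exI[of _ \<gamma>])
    using pc hi unfolding h_def vd by (auto simp: \<gamma>_def)
qed
primrec hyb :: "(real^'m \<Rightarrow> 'z \<Rightarrow> real^'m) \<Rightarrow> nat \<Rightarrow> 'z list \<Rightarrow> 'z list \<Rightarrow> nat \<Rightarrow> real^'m \<Rightarrow> (nat \<Rightarrow> nat \<Rightarrow> nat) \<Rightarrow> nat \<Rightarrow> real^'m" where
  "hyb g b S S' j \<theta>0 \<Gamma> 0 = \<theta>0"
| "hyb g b S S' j \<theta>0 \<Gamma> (Suc k) = opt_step g b (if k < j then S' else S) (\<Gamma> k) (hyb g b S S' j \<theta>0 \<Gamma> k)"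

lemma opt_step_cong: assumes "\<And>i. i < b \<Longrightarrow> \<gamma> i = \<gamma>' i" shows "opt_step g b S \<gamma> \<theta> = opt_step g b S \<gamma>' \<theta>"
proof -
  have "(\<Sum>i<b. g \<theta> (S ! \<gamma> i)) = (\<Sum>i<b. g \<theta> (S ! \<gamma>' i))" by (rule sum.cong) (auto simp: assms)
  then show ?thesis unfolding opt_step_def by simp
qed

lemma hyb_cong: "(\<And>j i. j < k \<Longrightarrow> i < b \<Longrightarrow> \<Gamma> j i = \<Gamma>' j i) \<Longrightarrow> hyb g b S S' jj \<theta> \<Gamma> k = hyb g b S S' jj \<theta> \<Gamma>' k"
proof (induction k)
  case (Suc k)
  have "hyb g b S S' jj \<theta> \<Gamma> k = hyb g b S S' jj \<theta> \<Gamma>' k" using Suc.prems by (intro Suc.IH) auto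
  moreover have "opt_step g b T (\<Gamma> k) x = opt_step g b T (\<Gamma>' k) x" for T x using Suc.prems by (intro opt_step_cong) auto
  ultimately show ?case by simp
qed simp

lemma hyb_adapted: "adapted_before k (\<lambda>\<omega>. hyb g b S S' jj (f (fst \<omega>)) (snd \<omega>) k)"
  unfolding adapted_before_def by (auto intro!: hyb_cong)

lemma hyb_traj0: "hyb g b S S' 0 \<theta> \<Gamma> k = traj g b S \<theta> \<Gamma> k"
  by (induction k) auto

lemma hyb_trajS': "k \<le> j \<Longrightarrow> hyb g b S S' j \<theta> \<Gamma> k = traj g b S' \<theta> \<Gamma> k"
  by (induction k) auto

lemma hyb_step: "j \<le> k \<Longrightarrow> hyb g b S S' j \<theta> \<Gamma> (Suc k) = opt_step g b S (\<Gamma> k) (hyb g b S S' j \<theta> \<Gamma> k)"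
  by simp

lemma hyb_cont:
  assumes "\<And>z. continuous_on UNIV (\<lambda>\<theta>. g \<theta> z)"
  shows "continuous_on UNIV (\<lambda>\<theta>. hyb g b S S' j \<theta> \<Gamma> k)"
proof (induction k)
  case 0 then show ?case by (simp add: continuous_on_id)
next
  case (Suc k)
  show ?case unfolding hyb.simps opt_step_def
    apply (intro continuous_intros)
    using continuous_on_compose2[OF assms Suc] by auto
qed

definition enc :: "nat \<Rightarrow> nat \<Rightarrow> (nat \<Rightarrow> nat \<Rightarrow> nat) \<Rightarrow> nat list list" where
  "enc k b \<Gamma> = map (\<lambda>j. map (\<Gamma> j) [0..<b]) [0..<k]"
definition dec :: "nat list list \<Rightarrow> nat \<Rightarrow> nat \<Rightarrow> nat" where
  "dec xs j i = xs ! j ! i"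

lemma hyb_meas:
  assumes gc: "\<And>z. continuous_on UNIV (\<lambda>\<theta>. g \<theta> z)" and f: "f \<in> borel_measurable W"
  shows "(\<lambda>\<omega>. hyb g b S S' jj (f (fst \<omega>)) (snd \<omega>) k) \<in> borel_measurable (alg_space W t b n)"
proof -
  have eq: "hyb g b S S' jj (f (fst \<omega>)) (snd \<omega>) k = hyb g b S S' jj (f (fst \<omega>)) (dec (enc k b (snd \<omega>))) k" for \<omega>
    by (rule hyb_cong) (simp add: dec_def enc_def)
  have m1: "(\<lambda>\<omega>. hyb g b S S' jj (f (fst \<omega>)) (dec xs) k) \<in> borel_measurable (alg_space W t b n)" for xs
  proof -
    have "(\<lambda>\<theta>. hyb g b S S' jj \<theta> (dec xs) k) \<in> borel_measurable borel"
      using hyb_cont[OF gc] by (rule borel_measurable_continuous_onI)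
    moreover have "(\<lambda>\<omega>. f (fst \<omega>)) \<in> borel_measurable (alg_space W t b n)"
      unfolding alg_space_def using f by measurable
    ultimately show ?thesis by (rule measurable_compose[rotated])
  qed
  have m2: "(\<lambda>\<omega>. enc k b (snd \<omega>)) \<in> measurable (alg_space W t b n) (count_space UNIV)"
    unfolding alg_space_def by (rule measurable_compose[OF measurable_snd]) simp
  show ?thesis
    unfolding eq by (rule measurable_compose_countable[OF m1 m2])
qed

lemma opt_step_diff:
  assumes gb: "\<And>\<theta> z. norm (g \<theta> z) \<le> \<xi>" and b: "1 \<le> b"
  shows "norm (opt_step g b S \<gamma> \<theta> - opt_step g b S' \<gamma> \<theta>)
     \<le> 2 * \<xi> / b * (\<Sum>i<b. indicator {d. S ! d \<noteq> S' ! d} (\<gamma> i))"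
proof -
  have "opt_step g b S \<gamma> \<theta> - opt_step g b S' \<gamma> \<theta> = (1 / real b) *\<^sub>R (\<Sum>i<b. g \<theta> (S ! \<gamma> i) - g \<theta> (S' ! \<gamma> i))"
    unfolding opt_step_def by (simp add: sum_subtractf scaleR_diff_right)
  also have "norm \<dots> = (1 / real b) * norm (\<Sum>i<b. g \<theta> (S ! \<gamma> i) - g \<theta> (S' ! \<gamma> i))" by simp
  also have "\<dots> \<le> (1 / real b) * (\<Sum>i<b. 2 * \<xi> * indicator {d. S ! d \<noteq> S' ! d} (\<gamma> i))"
  proof (intro mult_left_mono order.trans[OF norm_sum] sum_mono)
    fix i
    show "norm (g \<theta> (S ! \<gamma> i) - g \<theta> (S' ! \<gamma> i)) \<le> 2 * \<xi> * indicator {d. S ! d \<noteq> S' ! d} (\<gamma> i)"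
    proof (cases "S ! \<gamma> i = S' ! \<gamma> i")
      case False
      have "norm (g \<theta> (S ! \<gamma> i) - g \<theta> (S' ! \<gamma> i)) \<le> norm (g \<theta> (S ! \<gamma> i)) + norm (g \<theta> (S' ! \<gamma> i))"
        by (rule norm_triangle_ineq4)
      also have "\<dots> \<le> 2 * \<xi>" using gb[of \<theta> "S ! \<gamma> i"] gb[of \<theta> "S' ! \<gamma> i"] by linarith
      finally show ?thesis using False by simp
    qed simp
  qed simp
  also have "\<dots> = 2 * \<xi> / b * (\<Sum>i<b. indicator {d. S ! d \<noteq> S' ! d} (\<gamma> i))"
  proof -
    have "(\<Sum>i<b. 2 * \<xi> * indicator {d. S ! d \<noteq> S' ! d} (\<gamma> i)) = 2 * \<xi> * (\<Sum>i<b. indicator {d. S ! d \<noteq> S' ! d} (\<gamma> i))"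
      by (simp add: sum_distrib_left)
    then show ?thesis by simp
  qed
  finally show ?thesis .
qed

lemma ennreal_div_le:
  assumes c: "c > 0" and d: "d \<ge> 0" and le: "ennreal c * X \<le> ennreal d"
  shows "X \<le> ennreal (d / c)"
proof -
  have "X = ennreal (1 / c) * (ennreal c * X)"
    using c by (simp add: mult.assoc[symmetric] ennreal_mult[symmetric])
  also have "\<dots> \<le> ennreal (1 / c) * ennreal d" by (intro mult_left_mono le) simp
  also have "\<dots> = ennreal (d / c)" using c d by (simp add: ennreal_mult[symmetric])
  finally show ?thesis .
qed

lemma batch_ne: "1 \<le> n \<Longrightarrow> batch_seqs t b n \<noteq> {}" and batch_fin: "finite (batch_seqs t b n)"
  unfolding batch_seqs_def by (auto simp: PiE_eq_empty_iff lessThan_empty_iff intro!: finite_PiE)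

lemma alg_prob:
  assumes "prob_space W" "1 \<le> n" shows "prob_space (alg_space W t b n)"
proof -
  interpret W: prob_space W by fact
  interpret p: prob_space "measure_pmf (pmf_of_set (batch_seqs t b n))" by (rule prob_space_measure_pmf)
  interpret pair_prob_space W "measure_pmf (pmf_of_set (batch_seqs t b n))" ..
  show ?thesis unfolding alg_space_def by (rule prob_space_axioms)
qed

lemma nn_snd:
  assumes W: "prob_space W"
  shows "(\<integral>\<^sup>+\<omega>. h (snd \<omega>) \<partial>alg_space W t b n) = (\<integral>\<^sup>+\<Gamma>. h \<Gamma> \<partial>measure_pmf (pmf_of_set (batch_seqs t b n)))"
proof -
  interpret W: prob_space W by fact
  have "(\<integral>\<^sup>+\<omega>. h (snd \<omega>) \<partial>alg_space W t b n) = (\<integral>\<^sup>+ x. \<integral>\<^sup>+ y. h (snd (x, y)) \<partial>measure_pmf (pmf_of_set (batch_seqs t b n)) \<partial>W)"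
    unfolding alg_space_def by (rule measure_pmf.nn_integral_fst[symmetric]) (rule measurable_compose[OF measurable_snd], simp)
  also have "\<dots> = (\<integral>\<^sup>+\<Gamma>. h \<Gamma> \<partial>measure_pmf (pmf_of_set (batch_seqs t b n)))"
    by (simp add: W.emeasure_space_1)
  finally show ?thesis .
qed

lemma PiE_dflt_eq: "PiE A B = PiE_dflt A undefined B"
  unfolding PiE_dflt_def PiE_def extensional_def by auto

lemma marg: 
  assumes "j < t" "i < b" "1 \<le> n"
  shows "map_pmf (\<lambda>\<Gamma>. \<Gamma> j i) (pmf_of_set (batch_seqs t b n)) = pmf_of_set {..<n}"
proof -
  have ne: "{..<n} \<noteq> {}" using assms by (auto simp: lessThan_empty_iff)
  have inner: "pmf_of_set (PiE {..<b} (\<lambda>_. {..<n})) = Pi_pmf {..<b} undefined (\<lambda>_. pmf_of_set {..<n})"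
    unfolding PiE_dflt_eq using ne by (intro Pi_pmf_of_set[symmetric]) auto
  have ne2: "PiE {..<b} (\<lambda>_. {..<n}) \<noteq> {}" using ne by (simp add: PiE_eq_empty_iff)
  have outer: "pmf_of_set (batch_seqs t b n) = Pi_pmf {..<t} undefined (\<lambda>_. pmf_of_set (PiE {..<b} (\<lambda>_. {..<n})))"
    unfolding batch_seqs_def PiE_dflt_eq[of "{..<t}"] using ne2 by (intro Pi_pmf_of_set[symmetric]) (auto intro!: finite_PiE)
  have "map_pmf (\<lambda>\<Gamma>. \<Gamma> j i) (pmf_of_set (batch_seqs t b n)) = map_pmf (\<lambda>f. f i) (map_pmf (\<lambda>\<Gamma>. \<Gamma> j) (pmf_of_set (batch_seqs t b n)))"
    by (simp add: map_pmf_comp)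
  also have "map_pmf (\<lambda>\<Gamma>. \<Gamma> j) (pmf_of_set (batch_seqs t b n)) = pmf_of_set (PiE {..<b} (\<lambda>_. {..<n}))"
    unfolding outer using assms by (subst Pi_pmf_component) auto
  also have "map_pmf (\<lambda>f. f i) \<dots> = pmf_of_set {..<n}"
    unfolding inner using assms by (subst Pi_pmf_component) auto
  finally show ?thesis .
qed

lemma coord_prob:
  assumes "j < t" "i < b" "1 \<le> n"
  shows "(\<integral>\<^sup>+\<Gamma>. ennreal (indicator D (\<Gamma> j i)) \<partial>measure_pmf (pmf_of_set (batch_seqs t b n)))
     = ennreal (card ({..<n} \<inter> D) / n)"
proof -
  have "(\<integral>\<^sup>+\<Gamma>. ennreal (indicator D (\<Gamma> j i)) \<partial>measure_pmf (pmf_of_set (batch_seqs t b n)))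
     = (\<integral>\<^sup>+x. ennreal (indicator D x) \<partial>measure_pmf (map_pmf (\<lambda>\<Gamma>. \<Gamma> j i) (pmf_of_set (batch_seqs t b n))))"
    by simp
  also have "\<dots> = emeasure (measure_pmf (pmf_of_set {..<n})) D"
    unfolding marg[OF assms] by (simp add: ennreal_indicator nn_integral_indicator)
  also have "\<dots> = ennreal (card ({..<n} \<inter> D) / n)"
    using assms by (subst emeasure_pmf_of_set) (auto simp: divide_ennreal ennreal_of_nat_eq_real_of_nat lessThan_empty_iff)
  finally show ?thesis .
qed
lemma geodist_bounds:
  fixes x y :: "real^'m"
  assumes mf: "metric_field M Mmin Mmax" and Mmin: "0 < Mmin"
  shows "sqrt Mmin * norm (y - x) \<le> geodist M x y" "geodist M x y \<le> sqrt Mmax * norm (y - x)"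
proof -
  let ?L = "{l. \<exists>\<gamma>. \<gamma> piecewise_C1_differentiable_on {0..1} \<and> \<gamma> 0 = x \<and> \<gamma> 1 = y \<and>
      ((\<lambda>s. sqrt (vector_derivative \<gamma> (at s) \<bullet> (M (\<gamma> s) *v vector_derivative \<gamma> (at s))))
         has_integral l) {0..1}}"
  obtain l0 where l0: "l0 \<in> ?L" "l0 \<le> sqrt Mmax * norm (y - x)" using path_upper_ex[OF mf, of x y] by blast
  have lb: "\<And>l. l \<in> ?L \<Longrightarrow> sqrt Mmin * norm (y - x) \<le> l" using path_lower[OF mf Mmin] by blast
  have ne: "?L \<noteq> {}" using l0 by blast
  have bdd: "bdd_below ?L" by (rule bdd_belowI[OF lb])
  show "sqrt Mmin * norm (y - x) \<le> geodist M x y" unfolding geodist_def by (rule cInf_greatest[OF ne lb])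
  have "geodist M x y \<le> l0" unfolding geodist_def by (rule cInf_lower[OF l0(1) bdd])
  then show "geodist M x y \<le> sqrt Mmax * norm (y - x)" using l0(2) by linarith
qed

lemma norm_telescope:
  fixes v :: "nat \<Rightarrow> 'a::real_normed_vector"
  shows "norm (v 0 - v N) \<le> (\<Sum>a<N. norm (v a - v (Suc a)))"
proof (induction N)
  case (Suc N)
  have "norm (v 0 - v (Suc N)) \<le> norm (v 0 - v N) + norm (v N - v (Suc N))"
    using norm_triangle_ineq[of "v 0 - v N" "v N - v (Suc N)"] by simp
  then show ?case using Suc by simp
qed simp

lemma rev_geom:
  fixes \<mu> :: real assumes "0 < \<mu>" "\<mu> < 1"
  shows "(\<Sum>j<t. \<mu> ^ (t - Suc j)) \<le> 1 / (1 - \<mu>)"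
proof -
  have "(\<Sum>j<t. \<mu> ^ (t - Suc j)) = (\<Sum>j<t. \<mu> ^ j)"
    by (rule sum.reindex_bij_witness[of _ "\<lambda>j. t - Suc j" "\<lambda>j. t - Suc j"]) auto
  also have "\<dots> = (1 - \<mu> ^ t) / (1 - \<mu>)" using assms by (simp add: sum_gp_strict)
  also have "\<dots> \<le> 1 / (1 - \<mu>)" using assms by (intro divide_right_mono) auto
  finally show ?thesis .
qed
theorem theorem4:
  fixes loss :: "real^'m \<Rightarrow> 'z \<Rightarrow> real"
    and g :: "real^'m \<Rightarrow> 'z \<Rightarrow> real^'m"
    and W :: "'w measure"
    and init :: "'z list \<Rightarrow> 'w \<Rightarrow> real^'m"
    and M :: "'z list \<Rightarrow> nat \<Rightarrow> real^'m \<Rightarrow> real^'m^'m"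
    and \<theta>ref :: "real^'m"
    and L \<xi> C \<mu> Mmin Mmax :: real
    and n b t :: nat
  assumes lip: "\<And>z. L-lipschitz_on UNIV (\<lambda>\<theta>. loss \<theta> z)"
    and g_smooth: "\<And>z. smooth_map (\<lambda>\<theta>. g \<theta> z)"
    and g_bound: "\<And>\<theta> z. norm (g \<theta> z) \<le> \<xi>"
    and b_pos: "1 \<le> b" and b_le: "b \<le> n"
    and W_prob: "prob_space W"
    and init_meas: "\<And>S. init S \<in> borel_measurable W"
    and init_ball: "\<And>S w. init S w \<in> cball \<theta>ref (C / 2)"
    and mu: "0 < \<mu>" "\<mu> < 1"
    and Mmin_pos: "0 < Mmin"
    and metrics: "\<And>S k. length S = n \<Longrightarrow> k \<le> t \<Longrightarrow> metric_field (M S k) Mmin Mmax"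
    and contr: "\<And>S. length S = n \<Longrightarrow>
                  contracting_in_expectation (alg_space W t b n) g b t S (M S) \<mu>"
  shows "uniformly_stable (alg_space W t b n) n (alg g b t init) loss
           (L * sqrt (Mmax / Mmin) * C * \<mu> ^ t
            + 2 * sqrt (Mmax / Mmin) * L * \<xi> / ((1 - \<mu>) * real n))"
proof -
  have L0: "0 \<le> L" using lip[of undefined] by (rule lipschitz_on_nonneg)
  have gc: "continuous_on UNIV (\<lambda>\<theta>. g \<theta> z)" for z
  proof -
    from g_smooth[of z] obtain F where F: "(\<lambda>\<theta>. g \<theta> z) \<in> F"
      "\<forall>h\<in>F. \<exists>Dh. (\<forall>x. (h has_derivative Dh x) (at x)) \<and> (\<forall>v. (\<lambda>x. Dh x v) \<in> F)"
      unfolding smooth_map_def by blast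
    then obtain Dh where "\<forall>x. ((\<lambda>\<theta>. g \<theta> z) has_derivative Dh x) (at x)" by blast
    then have "isCont (\<lambda>\<theta>. g \<theta> z) x" for x using has_derivative_continuous by blast
    then show ?thesis by (intro continuous_at_imp_continuous_on) blast
  qed
  have n1: "1 \<le> n" using b_pos b_le by simp
  have xi0: "0 \<le> \<xi>" by (rule order_trans[OF norm_ge_zero g_bound])
  have C0: "0 \<le> C"
  proof -
    have "dist \<theta>ref (init undefined undefined) \<le> C / 2" using init_ball[of undefined undefined] by (simp add: mem_cball)
    moreover have "0 \<le> dist \<theta>ref (init undefined undefined)" by (rule zero_le_dist)
    ultimately show ?thesis by linarith
  qed
  have MM: "Mmin \<le> Mmax" if "metric_field MF Mmin Mmax" for MF :: "real^'m \<Rightarrow> real^'m^'m"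
  proof -
    have "\<exists>v::real^'m. v \<bullet> v = 1"
      by (intro exI[of _ "axis undefined 1"]) (simp add: inner_axis_axis)
    then obtain v :: "real^'m" where "v \<bullet> v = 1" by blast
    moreover have "Mmin * (v \<bullet> v) \<le> v \<bullet> (MF 0 *v v)" "v \<bullet> (MF 0 *v v) \<le> Mmax * (v \<bullet> v)"
      using that unfolding metric_field_def by blast+
    ultimately show ?thesis by simp
  qed
  show ?thesis unfolding uniformly_stable_def
  proof (intro allI impI)
    fix S S' :: "'z list" and z
    assume nb: "neighbours n S S'"
    then have lenS: "length S = n" and cardD: "card {i. i < n \<and> S ! i \<noteq> S' ! i} \<le> 1"
      unfolding neighbours_def by auto
    define P where "P = alg_space W t b n"
    interpret P: prob_space P unfolding P_def using alg_prob[OF W_prob n1] .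
    have mf: "\<And>k. k \<le> t \<Longrightarrow> metric_field (M S k) Mmin Mmax" using metrics lenS by auto
    have MM': "Mmin \<le> Mmax" using MM[OF mf[of 0]] by simp
    define H where "H a \<omega> k = (if a = 0 then hyb g b S S' 0 (init S (fst \<omega>)) (snd \<omega>) k
                         else hyb g b S S' (a - 1) (init S' (fst \<omega>)) (snd \<omega>) k)" for a \<omega> k
    have Hmeas[measurable]: "(\<lambda>\<omega>. H a \<omega> k) \<in> borel_measurable P" for a k
      unfolding H_def P_def by (cases "a = 0") (simp_all add: hyb_meas[OF gc init_meas])
    have Hadapt: "adapted_before k (\<lambda>\<omega>. H a \<omega> k)" for a k
      unfolding H_def by (cases "a = 0") (simp_all add: hyb_adapted)
    have Hstep: "H a \<omega> (Suc k) = opt_step g b S (snd \<omega> k) (H a \<omega> k)" if "a - 1 \<le> k" for a k \<omega>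
      using that unfolding H_def by auto
    have H0: "H 0 \<omega> t = alg g b t init S \<omega>" for \<omega>
      unfolding H_def alg_def by (simp add: hyb_traj0)
    have Hlast: "H (Suc t) \<omega> t = alg g b t init S' \<omega>" for \<omega>
      unfolding H_def alg_def by (simp add: hyb_trajS')
    have ctr: "contracting_in_expectation P g b t S (M S) \<mu>" unfolding P_def using contr lenS .
    have cstep: "(\<integral>\<^sup>+\<omega>. ennreal (geodist (M S (Suc k)) (opt_step g b S (snd \<omega> k) (X \<omega>))
                                              (opt_step g b S (snd \<omega> k) (Y \<omega>))) \<partial>P)
        \<le> ennreal \<mu> * (\<integral>\<^sup>+\<omega>. ennreal (geodist (M S k) (X \<omega>) (Y \<omega>)) \<partial>P)"
      if "k < t" "X \<in> borel_measurable P" "Y \<in> borel_measurable P" "adapted_before k X" "adapted_before k Y" for k X Y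
      using ctr that unfolding contracting_in_expectation_def by simp
    have iter: "(\<integral>\<^sup>+\<omega>. ennreal (geodist (M S k) (H a \<omega> k) (H (Suc a) \<omega> k)) \<partial>P)
       \<le> ennreal (\<mu> ^ (k - a)) * (\<integral>\<^sup>+\<omega>. ennreal (geodist (M S a) (H a \<omega> a) (H (Suc a) \<omega> a)) \<partial>P)"
      if "a \<le> k" "k \<le> t" for a k
      using that
    proof (induction k)
      case 0 then show ?case by simp
    next
      case (Suc k)
      show ?case
      proof (cases "a = Suc k")
        case True then show ?thesis by simp
      next
        case False
        with Suc.prems have ak: "a \<le> k" "k < t" by auto
        have "(\<integral>\<^sup>+\<omega>. ennreal (geodist (M S (Suc k)) (H a \<omega> (Suc k)) (H (Suc a) \<omega> (Suc k))) \<partial>P)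
          = (\<integral>\<^sup>+\<omega>. ennreal (geodist (M S (Suc k)) (opt_step g b S (snd \<omega> k) (H a \<omega> k))
                 (opt_step g b S (snd \<omega> k) (H (Suc a) \<omega> k))) \<partial>P)"
          using ak by (simp add: Hstep)
        also have "\<dots> \<le> ennreal \<mu> * (\<integral>\<^sup>+\<omega>. ennreal (geodist (M S k) (H a \<omega> k) (H (Suc a) \<omega> k)) \<partial>P)"
          by (rule cstep[OF ak(2) Hmeas Hmeas Hadapt Hadapt])
        also have "\<dots> \<le> ennreal \<mu> * (ennreal (\<mu> ^ (k - a)) * (\<integral>\<^sup>+\<omega>. ennreal (geodist (M S a) (H a \<omega> a) (H (Suc a) \<omega> a)) \<partial>P))"
          using Suc.IH ak by (intro mult_left_mono) auto
        also have "\<dots> = ennreal (\<mu> ^ (Suc k - a)) * (\<integral>\<^sup>+\<omega>. ennreal (geodist (M S a) (H a \<omega> a) (H (Suc a) \<omega> a)) \<partial>P)"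
          using ak mu by (simp add: Suc_diff_le mult.assoc[symmetric] ennreal_mult[symmetric])
        finally show ?thesis .
      qed
    qed
    have pair: "ennreal (sqrt Mmin) * (\<integral>\<^sup>+\<omega>. ennreal (norm (H a \<omega> t - H (Suc a) \<omega> t)) \<partial>P)
       \<le> ennreal (\<mu> ^ (t - a) * sqrt Mmax) * (\<integral>\<^sup>+\<omega>. ennreal (norm (H a \<omega> a - H (Suc a) \<omega> a)) \<partial>P)"
      if "a \<le> t" for a
    proof -
      have "ennreal (sqrt Mmin) * (\<integral>\<^sup>+\<omega>. ennreal (norm (H a \<omega> t - H (Suc a) \<omega> t)) \<partial>P)
          = (\<integral>\<^sup>+\<omega>. ennreal (sqrt Mmin * norm (H (Suc a) \<omega> t - H a \<omega> t)) \<partial>P)"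
      proof -
        have e: "ennreal (sqrt Mmin) * ennreal (norm (H a \<omega> t - H (Suc a) \<omega> t)) = ennreal (sqrt Mmin * norm (H (Suc a) \<omega> t - H a \<omega> t))" for \<omega>
          by (subst norm_minus_commute) (simp add: ennreal_mult Mmin_pos less_imp_le)
        show ?thesis by (subst nn_integral_cmult[symmetric]) (simp_all add: e)
      qed
      also have "\<dots> \<le> (\<integral>\<^sup>+\<omega>. ennreal (geodist (M S t) (H a \<omega> t) (H (Suc a) \<omega> t)) \<partial>P)"
        by (intro nn_integral_mono ennreal_leI geodist_bounds(1)[OF mf Mmin_pos]) simp
      also have "\<dots> \<le> ennreal (\<mu> ^ (t - a)) * (\<integral>\<^sup>+\<omega>. ennreal (geodist (M S a) (H a \<omega> a) (H (Suc a) \<omega> a)) \<partial>P)"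
        using iter[OF that order.refl] .
      also have "\<dots> \<le> ennreal (\<mu> ^ (t - a)) * (\<integral>\<^sup>+\<omega>. ennreal (sqrt Mmax * norm (H a \<omega> a - H (Suc a) \<omega> a)) \<partial>P)"
        using geodist_bounds(2)[OF mf[OF that] Mmin_pos]
        by (intro mult_left_mono nn_integral_mono ennreal_leI) (auto simp: norm_minus_commute)
      also have "\<dots> = ennreal (\<mu> ^ (t - a) * sqrt Mmax) * (\<integral>\<^sup>+\<omega>. ennreal (norm (H a \<omega> a - H (Suc a) \<omega> a)) \<partial>P)"
      proof -
        have e: "ennreal (sqrt Mmax * norm (H a \<omega> a - H (Suc a) \<omega> a)) = ennreal (sqrt Mmax) * ennreal (norm (H a \<omega> a - H (Suc a) \<omega> a))" for \<omega>
          using MM' Mmin_pos by (simp add: ennreal_mult)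
        have "(\<integral>\<^sup>+\<omega>. ennreal (sqrt Mmax * norm (H a \<omega> a - H (Suc a) \<omega> a)) \<partial>P) = ennreal (sqrt Mmax) * (\<integral>\<^sup>+\<omega>. ennreal (norm (H a \<omega> a - H (Suc a) \<omega> a)) \<partial>P)"
          unfolding e by (rule nn_integral_cmult) measurable
        then show ?thesis using mu MM' Mmin_pos by (simp add: ennreal_mult mult.assoc)
      qed
      finally show ?thesis .
    qed
    define r where "r a = (if a = 0 then \<mu> ^ t * sqrt Mmax * C / sqrt Mmin
                           else \<mu> ^ (t - a) * sqrt Mmax * (2 * \<xi> / n) / sqrt Mmin)" for a
    have init_diff: "(\<integral>\<^sup>+\<omega>. ennreal (norm (H 0 \<omega> 0 - H (Suc 0) \<omega> 0)) \<partial>P) \<le> ennreal C"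
    proof -
      have "(\<integral>\<^sup>+\<omega>. ennreal (norm (H 0 \<omega> 0 - H (Suc 0) \<omega> 0)) \<partial>P) \<le> (\<integral>\<^sup>+\<omega>. ennreal C \<partial>P)"
      proof (intro nn_integral_mono ennreal_leI)
        fix \<omega> :: "'w \<times> (nat \<Rightarrow> nat \<Rightarrow> nat)"
        have "norm (init S (fst \<omega>) - init S' (fst \<omega>)) \<le> dist (init S (fst \<omega>)) \<theta>ref + dist \<theta>ref (init S' (fst \<omega>))"
          by (metis dist_norm dist_triangle)
        also have "\<dots> \<le> C" using init_ball[of S "fst \<omega>"] init_ball[of S' "fst \<omega>"] by (auto simp: dist_commute)
        finally show "norm (H 0 \<omega> 0 - H (Suc 0) \<omega> 0) \<le> C" unfolding H_def by simp
      qed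
      also have "\<dots> = ennreal C" by (simp add: P.emeasure_space_1)
      finally show ?thesis .
    qed
    define D where "D = {d. S ! d \<noteq> S' ! d}"
    have step_diff: "(\<integral>\<^sup>+\<omega>. ennreal (norm (H (Suc j) \<omega> (Suc j) - H (Suc (Suc j)) \<omega> (Suc j))) \<partial>P) \<le> ennreal (2 * \<xi> / n)"
      if "j < t" for j
    proof -
      have "(\<integral>\<^sup>+\<omega>. ennreal (norm (H (Suc j) \<omega> (Suc j) - H (Suc (Suc j)) \<omega> (Suc j))) \<partial>P)
          \<le> (\<integral>\<^sup>+\<omega>. ennreal (2 * \<xi> / b * (\<Sum>i<b. indicator D (snd \<omega> j i))) \<partial>P)"
      proof (intro nn_integral_mono ennreal_leI)
        fix \<omega> :: "'w \<times> (nat \<Rightarrow> nat \<Rightarrow> nat)"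
        have e: "hyb g b S S' j (init S' (fst \<omega>)) (snd \<omega>) j = hyb g b S S' (Suc j) (init S' (fst \<omega>)) (snd \<omega>) j"
          by (simp add: hyb_trajS')
        show "norm (H (Suc j) \<omega> (Suc j) - H (Suc (Suc j)) \<omega> (Suc j)) \<le> 2 * \<xi> / b * (\<Sum>i<b. indicator D (snd \<omega> j i))"
          unfolding H_def D_def using opt_step_diff[OF g_bound b_pos] by (simp add: e)
      qed
      also have "\<dots> = (\<integral>\<^sup>+\<Gamma>. ennreal (2 * \<xi> / b * (\<Sum>i<b. indicator D (\<Gamma> j i))) \<partial>measure_pmf (pmf_of_set (batch_seqs t b n)))"
        unfolding P_def by (rule nn_snd[OF W_prob])
      also have "\<dots> = ennreal (2 * \<xi> / b) * (\<Sum>i<b. (\<integral>\<^sup>+\<Gamma>. ennreal (indicator D (\<Gamma> j i)) \<partial>measure_pmf (pmf_of_set (batch_seqs t b n))))"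
      proof -
        have e: "ennreal (2 * \<xi> / b * (\<Sum>i<b. indicator D (\<Gamma> j i))) = ennreal (2 * \<xi> / b) * (\<Sum>i<b. ennreal (indicator D (\<Gamma> j i)))" for \<Gamma> :: "nat \<Rightarrow> nat \<Rightarrow> nat"
        proof -
          have s1: "(\<Sum>i<b. ennreal (indicator D (\<Gamma> j i))) = ennreal (\<Sum>i<b. indicator D (\<Gamma> j i))"
            by (rule sum_ennreal) auto
          have c1: "0 \<le> 2 * \<xi> / b" using xi0 by simp
          have c2: "0 \<le> (\<Sum>i<b. indicator D (\<Gamma> j i) :: real)" by (rule sum_nonneg) auto
          show ?thesis unfolding s1 by (rule ennreal_mult[OF c1 c2])
        qed
        have ns: "(\<integral>\<^sup>+\<Gamma>. (\<Sum>i<b. ennreal (indicator D (\<Gamma> j i))) \<partial>measure_pmf (pmf_of_set (batch_seqs t b n)))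
           = (\<Sum>i<b. (\<integral>\<^sup>+\<Gamma>. ennreal (indicator D (\<Gamma> j i)) \<partial>measure_pmf (pmf_of_set (batch_seqs t b n))))"
          by (rule nn_integral_sum) simp
        have "(\<integral>\<^sup>+\<Gamma>. ennreal (2 * \<xi> / b) * (\<Sum>i<b. ennreal (indicator D (\<Gamma> j i))) \<partial>measure_pmf (pmf_of_set (batch_seqs t b n)))
           = ennreal (2 * \<xi> / b) * (\<integral>\<^sup>+\<Gamma>. (\<Sum>i<b. ennreal (indicator D (\<Gamma> j i))) \<partial>measure_pmf (pmf_of_set (batch_seqs t b n)))"
          by (rule nn_integral_cmult) simp
        then show ?thesis unfolding e ns .
      qed
      also have "\<dots> = ennreal (2 * \<xi> / b) * (\<Sum>i<b. ennreal (card ({..<n} \<inter> D) / n))"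
        using coord_prob[OF that _ n1] by simp
      also have "\<dots> = ennreal (2 * \<xi> / b * (b * (card ({..<n} \<inter> D) / n)))"
      proof -
        have q0: "0 \<le> real (card ({..<n} \<inter> D)) / n" by simp
        have "(\<Sum>i<b. ennreal (card ({..<n} \<inter> D) / n)) = ennreal (\<Sum>i<b. card ({..<n} \<inter> D) / n)"
          by (rule sum_ennreal) simp
        also have "\<dots> = ennreal (b * (card ({..<n} \<inter> D) / n))" by simp
        finally have s: "(\<Sum>i<b. ennreal (card ({..<n} \<inter> D) / n)) = ennreal (b * (card ({..<n} \<inter> D) / n))" .
        show ?thesis unfolding s using xi0 q0 by (intro ennreal_mult[symmetric]) auto
      qed
      also have "\<dots> \<le> ennreal (2 * \<xi> / n)"
      proof (intro ennreal_leI)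
        have "{..<n} \<inter> D = {i. i < n \<and> S ! i \<noteq> S' ! i}" unfolding D_def by auto
        then have c: "real (card ({..<n} \<inter> D)) \<le> 1" using cardD by simp
        show "2 * \<xi> / b * (b * (card ({..<n} \<inter> D) / n)) \<le> 2 * \<xi> / n"
          using b_pos n1 xi0 c by (simp add: field_simps mult_left_le)
      qed
      finally show ?thesis .
    qed
    have r0: "0 \<le> r a" for a unfolding r_def using mu C0 xi0 Mmin_pos MM' by (auto intro!: divide_nonneg_nonneg mult_nonneg_nonneg)
    have delta: "(\<integral>\<^sup>+\<omega>. ennreal (norm (H a \<omega> t - H (Suc a) \<omega> t)) \<partial>P) \<le> ennreal (r a)" if "a \<le> t" for a
    proof -
      have "ennreal (sqrt Mmin) * (\<integral>\<^sup>+\<omega>. ennreal (norm (H a \<omega> t - H (Suc a) \<omega> t)) \<partial>P)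
          \<le> ennreal (\<mu> ^ (t - a) * sqrt Mmax) * ennreal (if a = 0 then C else 2 * \<xi> / n)"
      proof (rule order.trans[OF pair[OF that]], intro mult_left_mono)
        show "(\<integral>\<^sup>+\<omega>. ennreal (norm (H a \<omega> a - H (Suc a) \<omega> a)) \<partial>P) \<le> ennreal (if a = 0 then C else 2 * \<xi> / n)"
        proof (cases a)
          case 0 then show ?thesis using init_diff by simp
        next
          case (Suc j) then show ?thesis using step_diff[of j] that by simp
        qed
      qed simp
      also have "\<dots> = ennreal (sqrt Mmin * r a)"
      proof -
        have m0: "0 \<le> \<mu> ^ (t - a) * sqrt Mmax" using mu MM' Mmin_pos by simp
        have c0: "0 \<le> (if a = 0 then C else 2 * \<xi> / n)" using C0 xi0 by simp
        have "ennreal (\<mu> ^ (t - a) * sqrt Mmax) * ennreal (if a = 0 then C else 2 * \<xi> / n)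
            = ennreal (\<mu> ^ (t - a) * sqrt Mmax * (if a = 0 then C else 2 * \<xi> / n))"
          by (rule ennreal_mult[OF m0 c0, symmetric])
        also have "\<mu> ^ (t - a) * sqrt Mmax * (if a = 0 then C else 2 * \<xi> / n) = sqrt Mmin * r a"
          unfolding r_def using Mmin_pos by (cases "a = 0") (simp_all add: field_simps)
        finally show ?thesis .
      qed
      finally have "ennreal (sqrt Mmin) * (\<integral>\<^sup>+\<omega>. ennreal (norm (H a \<omega> t - H (Suc a) \<omega> t)) \<partial>P) \<le> ennreal (sqrt Mmin * r a)" .
      from ennreal_div_le[OF _ _ this] show ?thesis using Mmin_pos r0[of a] by simp
    qed
    define B where "B = L * (\<Sum>a<Suc t. r a)"
    have total: "(\<integral>\<^sup>+\<omega>. ennreal (L * norm (alg g b t init S \<omega> - alg g b t init S' \<omega>)) \<partial>P) \<le> ennreal B"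
    proof -
      have "(\<integral>\<^sup>+\<omega>. ennreal (L * norm (alg g b t init S \<omega> - alg g b t init S' \<omega>)) \<partial>P)
          = ennreal L * (\<integral>\<^sup>+\<omega>. ennreal (norm (H 0 \<omega> t - H (Suc t) \<omega> t)) \<partial>P)"
      proof -
        have e: "ennreal (L * norm (alg g b t init S \<omega> - alg g b t init S' \<omega>)) = ennreal L * ennreal (norm (H 0 \<omega> t - H (Suc t) \<omega> t))" for \<omega>
          unfolding H0 Hlast using L0 by (simp add: ennreal_mult)
        show ?thesis unfolding e by (rule nn_integral_cmult) measurable
      qed
      also have "\<dots> \<le> ennreal L * (\<integral>\<^sup>+\<omega>. (\<Sum>a<Suc t. ennreal (norm (H a \<omega> t - H (Suc a) \<omega> t))) \<partial>P)"
      proof (intro mult_left_mono nn_integral_mono)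
        fix \<omega> :: "'w \<times> (nat \<Rightarrow> nat \<Rightarrow> nat)"
        have "(\<Sum>a<Suc t. ennreal (norm (H a \<omega> t - H (Suc a) \<omega> t))) = ennreal (\<Sum>a<Suc t. norm (H a \<omega> t - H (Suc a) \<omega> t))"
          by (rule sum_ennreal) simp
        moreover have "norm (H 0 \<omega> t - H (Suc t) \<omega> t) \<le> (\<Sum>a<Suc t. norm (H a \<omega> t - H (Suc a) \<omega> t))"
          by (rule norm_telescope[where v="\<lambda>a. H a \<omega> t"])
        ultimately show "ennreal (norm (H 0 \<omega> t - H (Suc t) \<omega> t)) \<le> (\<Sum>a<Suc t. ennreal (norm (H a \<omega> t - H (Suc a) \<omega> t)))"
          by (simp only:) (rule ennreal_leI)
      qed simp
      also have "\<dots> = ennreal L * (\<Sum>a<Suc t. (\<integral>\<^sup>+\<omega>. ennreal (norm (H a \<omega> t - H (Suc a) \<omega> t)) \<partial>P))"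
        by (subst nn_integral_sum) auto
      also have "\<dots> \<le> ennreal L * (\<Sum>a<Suc t. ennreal (r a))"
        by (intro mult_left_mono sum_mono delta) auto
      also have "\<dots> = ennreal B"
      proof -
        have "(\<Sum>a<Suc t. ennreal (r a)) = ennreal (\<Sum>a<Suc t. r a)" by (rule sum_ennreal) (rule r0)
        moreover have "0 \<le> (\<Sum>a<Suc t. r a)" by (rule sum_nonneg) (rule r0)
        ultimately show ?thesis unfolding B_def using L0 by (simp only:) (rule ennreal_mult[symmetric])
      qed
      finally show ?thesis .
    qed
    have Bbound: "B \<le> L * sqrt (Mmax / Mmin) * C * \<mu> ^ t + 2 * sqrt (Mmax / Mmin) * L * \<xi> / ((1 - \<mu>) * real n)"
    proof -
      have "(\<Sum>a<Suc t. r a) = r 0 + (\<Sum>j<t. r (Suc j))" by (rule sum.lessThan_Suc_shift)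
      also have "(\<Sum>j<t. r (Suc j)) = (\<Sum>j<t. \<mu> ^ (t - Suc j)) * (sqrt Mmax * (2 * \<xi> / n) / sqrt Mmin)"
      proof -
        have "(\<Sum>j<t. r (Suc j)) = (\<Sum>j<t. \<mu> ^ (t - Suc j) * (sqrt Mmax * (2 * \<xi> / n) / sqrt Mmin))"
          unfolding r_def by (intro sum.cong refl) (simp add: field_simps)
        also have "\<dots> = (\<Sum>j<t. \<mu> ^ (t - Suc j)) * (sqrt Mmax * (2 * \<xi> / n) / sqrt Mmin)"
          by (rule sum_distrib_right[symmetric])
        finally show ?thesis .
      qed
      also have "\<dots> \<le> 1 / (1 - \<mu>) * (sqrt Mmax * (2 * \<xi> / n) / sqrt Mmin)"
        using rev_geom[OF mu, of t] xi0 Mmin_pos MM' by (intro mult_right_mono) (auto intro!: divide_nonneg_nonneg mult_nonneg_nonneg)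
      finally have "(\<Sum>a<Suc t. r a) \<le> r 0 + 1 / (1 - \<mu>) * (sqrt Mmax * (2 * \<xi> / n) / sqrt Mmin)" by simp
      then have "B \<le> L * (r 0 + 1 / (1 - \<mu>) * (sqrt Mmax * (2 * \<xi> / n) / sqrt Mmin))"
        unfolding B_def using L0 by (intro mult_left_mono) auto
      also have "\<dots> = L * sqrt (Mmax / Mmin) * C * \<mu> ^ t + 2 * sqrt (Mmax / Mmin) * L * \<xi> / ((1 - \<mu>) * real n)"
        unfolding r_def using mu by (simp add: real_sqrt_divide field_simps)
      finally show ?thesis .
    qed
    have B0: "0 \<le> B" unfolding B_def using L0 r0 by (simp add: sum_nonneg)
    show "(\<integral>\<omega>. loss (alg g b t init S \<omega>) z - loss (alg g b t init S' \<omega>) z \<partial>alg_space W t b n)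
          \<le> L * sqrt (Mmax / Mmin) * C * \<mu> ^ t + 2 * sqrt (Mmax / Mmin) * L * \<xi> / ((1 - \<mu>) * real n)"
    proof (cases "integrable P (\<lambda>\<omega>. loss (alg g b t init S \<omega>) z - loss (alg g b t init S' \<omega>) z)")
      case False
      then show ?thesis unfolding P_def[symmetric] using Bbound B0 by (simp add: not_integrable_integral_eq)
    next
      case True
      let ?f = "\<lambda>\<omega>. loss (alg g b t init S \<omega>) z - loss (alg g b t init S' \<omega>) z"
      have "(\<integral>\<omega>. ?f \<omega> \<partial>P) \<le> (\<integral>\<omega>. \<bar>?f \<omega>\<bar> \<partial>P)"
        using True by (intro integral_mono) auto
      moreover have "ennreal (\<integral>\<omega>. \<bar>?f \<omega>\<bar> \<partial>P) = (\<integral>\<^sup>+\<omega>. ennreal \<bar>?f \<omega>\<bar> \<partial>P)"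
        using True by (intro nn_integral_eq_integral[symmetric]) auto
      moreover have "(\<integral>\<^sup>+\<omega>. ennreal \<bar>?f \<omega>\<bar> \<partial>P) \<le> (\<integral>\<^sup>+\<omega>. ennreal (L * norm (alg g b t init S \<omega> - alg g b t init S' \<omega>)) \<partial>P)"
      proof (intro nn_integral_mono ennreal_leI)
        fix \<omega> :: "'w \<times> (nat \<Rightarrow> nat \<Rightarrow> nat)"
        show "\<bar>?f \<omega>\<bar> \<le> L * norm (alg g b t init S \<omega> - alg g b t init S' \<omega>)"
          using lipschitz_onD[OF lip, of "alg g b t init S \<omega>" "alg g b t init S' \<omega>" z]
          by (simp add: dist_norm dist_real_def)
      qed
      ultimately have "ennreal (\<integral>\<omega>. \<bar>?f \<omega>\<bar> \<partial>P) \<le> ennreal B" using total by simp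
      then have "(\<integral>\<omega>. \<bar>?f \<omega>\<bar> \<partial>P) \<le> B" using B0 by (simp add: ennreal_le_iff)
      with \<open>(\<integral>\<omega>. ?f \<omega> \<partial>P) \<le> (\<integral>\<omega>. \<bar>?f \<omega>\<bar> \<partial>P)\<close> have "(\<integral>\<omega>. ?f \<omega> \<partial>P) \<le> B" by linarith
      then show ?thesis unfolding P_def using Bbound by linarith
    qed
  qed
qed

end
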